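(* Let $g:\mathbb{R}\to\mathbb{R}$ be continuously differentiable, even ($g(x)=g(-x)$ for all $x$) and $\pi$-periodic ($g(x+\pi)=g(x)$ for all $x$). Let $n\ge 1$ and for $\vec{\mu}=(\mu_0,\dots,\mu_{n-1})\in\mathbb{R}^n$ define $$G(\vec{\mu})=\frac{1}{\pi}\int_{-\pi/2}^{\pi/2}\prod_{i=0}^{n-1} g(x+\mu_i)\,dx.$$ For $i\in\{0,\dots,n-1\}$ let $\mathcal{N}_i=\{0,\dots,n-1\}\setminus\{i\}$. Then for every $i$ and every $\vec\mu$, $$\frac{\partial G}{\partial \mu_i}(\vec{\mu})=\frac{1}{2\pi}\int_{-\pi/2}^{\pi/2} g'(x)\Big\{\prod_{j\in\mathcal{N}_i} g(x+\mu_j-\mu_i)-\prod_{j\in\mathcal{N}_i} g(x-\mu_j+\mu_i)\Big\}\,dx.$$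
   Context: $g(x)$ models the probability of not detecting a target observed at angle $x$; $G(\vec\mu)$ is the average (over a uniformly distributed target orientation) probability of no detection after $n$ independent observations at relative angles $\mu_0,\dots,\mu_{n-1}$. *)

theory Defs
  imports "HOL-Analysis.Analysis"
begin

text \<open>Average probability of no detection: vectors in R^n are represented as
  functions nat => real, only the entries mu 0, ..., mu (n-1) are used.\<close>
definition Gavg :: "(real \<Rightarrow> real) \<Rightarrow> nat \<Rightarrow> (nat \<Rightarrow> real) \<Rightarrow> real" where
  "Gavg g n \<mu> = (1 / pi) * integral {-pi/2..pi/2} (\<lambda>x. \<Prod>i<n. g (x + \<mu> i))"

end

theory Submission imports Defs "HOL-Analysis.Interval_Integral" begin

lemma global_antideriv:
  fixes h :: "real \<Rightarrow> real"
  assumes "continuous_on UNIV h"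
  obtains H where "\<And>x. (H has_real_derivative h x) (at x)"
proof -
  have "\<exists>F. \<forall>x :: real. (-\<infinity>::ereal) < x \<longrightarrow> x < \<infinity> \<longrightarrow> (F has_vector_derivative h x) (at x)"
    by (rule einterval_antiderivative) (use assms in \<open>auto simp: continuous_on_eq_continuous_at\<close>)
  then obtain F where "\<And>x::real. (F has_vector_derivative h x) (at x)" by auto
  then show ?thesis using that by (auto simp: has_real_derivative_iff_has_vector_derivative)
qed

lemma periodic_shift:
  fixes h :: "real \<Rightarrow> real"
  assumes cont: "continuous_on UNIV h" and per: "\<And>x. h (x + pi) = h x"
  shows "integral {-pi/2..pi/2} (\<lambda>x. h (x + c)) = integral {-pi/2..pi/2} h"
proof -
  obtain H where H: "\<And>x. (H has_real_derivative h x) (at x)"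
    using global_antideriv[OF cont] by blast
  have I: "integral {-pi/2..pi/2} (\<lambda>x. h (x + c)) = H (pi/2 + c) - H (-pi/2 + c)" for c
  proof -
    have "((\<lambda>x. h (x + c)) has_integral (H (pi/2 + c) - H (-pi/2 + c))) {-pi/2..pi/2}"
    proof -
      have "((\<lambda>x. h (x + c)) has_integral ((\<lambda>x. H (x + c)) (pi/2) - (\<lambda>x. H (x + c)) (-pi/2))) {-pi/2..pi/2}"
      proof (rule fundamental_theorem_of_calculus)
        fix x assume "x \<in> {-pi/2..pi/2}"
        have "((\<lambda>x. H (x + c)) has_real_derivative h (x + c) * 1) (at x)"
          by (rule DERIV_chain2[OF H]) (auto intro!: derivative_eq_intros)
        then show "((\<lambda>x. H (x + c)) has_vector_derivative h (x + c)) (at x within {-pi/2..pi/2})"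
          by (auto simp: has_real_derivative_iff_has_vector_derivative intro: has_vector_derivative_at_within)
      qed simp
      then show ?thesis by (simp add: add.commute)
    qed
    then show ?thesis by (rule integral_unique)
  qed
  have D: "((\<lambda>c. H (pi/2 + c) - H (-pi/2 + c)) has_real_derivative 0) (at c)" for c
  proof -
    have "((\<lambda>c. H (pi/2 + c) - H (-pi/2 + c)) has_real_derivative h (pi/2 + c) * 1 - h (-pi/2 + c) * 1) (at c)"
      by (intro derivative_intros DERIV_chain2[OF H]) (auto intro!: derivative_eq_intros)
    moreover have "h (pi/2 + c) = h (-pi/2 + c)"
      using per[of "-pi/2 + c"] by (simp add: algebra_simps)
    ultimately show ?thesis by simp
  qed
  show ?thesis
    using I[of c] I[of 0] DERIV_isconst_all[of "\<lambda>c. H (pi/2 + c) - H (-pi/2 + c)" c 0] D by simp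
qed

theorem lemma3p1:
  fixes g g' :: "real \<Rightarrow> real" and n i :: nat and \<mu> :: "nat \<Rightarrow> real"
  assumes deriv: "\<And>x. (g has_real_derivative g' x) (at x)"
      and cont: "continuous_on UNIV g'"
      and even: "\<And>x. g x = g (- x)"
      and per: "\<And>x. g (x + pi) = g x"
      and n: "n \<ge> 1"
      and i: "i < n"
  shows "((\<lambda>t. Gavg g n (\<mu>(i := t))) has_real_derivative
           (1 / (2 * pi)) * integral {-pi/2..pi/2}
             (\<lambda>x. g' x * ((\<Prod>j\<in>{..<n} - {i}. g (x + \<mu> j - \<mu> i))
                          - (\<Prod>j\<in>{..<n} - {i}. g (x - \<mu> j + \<mu> i)))))
         (at (\<mu> i))"
proof -
  let ?I = "{-pi/2..pi/2}"
  define Q where "Q x = (\<Prod>j\<in>{..<n} - {i}. g (x + \<mu> j))" for x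
  define A where "A y = (\<Prod>j\<in>{..<n} - {i}. g (y + \<mu> j - \<mu> i))" for y
  define B where "B y = (\<Prod>j\<in>{..<n} - {i}. g (y - \<mu> j + \<mu> i))" for y
  have gc: "continuous_on UNIV g"
    using deriv by (meson DERIV_isCont continuous_at_imp_continuous_on)
  have gc': "continuous_on S (\<lambda>x. g (f x))" if "continuous_on S f" for S and f :: "'a::topological_space \<Rightarrow> real"
    using continuous_on_compose2[OF gc that] by auto
  have gc'': "continuous_on S (\<lambda>x. g' (f x))" if "continuous_on S f" for S and f :: "'a::topological_space \<Rightarrow> real"
    using continuous_on_compose2[OF cont that] by auto
  have Qc: "continuous_on S (\<lambda>x. Q (f x))" if "continuous_on S f" for S and f :: "'a::topological_space \<Rightarrow> real"
    unfolding Q_def by (intro continuous_intros gc' that)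
  have Ac: "continuous_on UNIV A" unfolding A_def by (intro continuous_intros gc')
  have Bc: "continuous_on UNIV B" unfolding B_def by (intro continuous_intros gc')
  have G: "Gavg g n (\<mu>(i := t)) = (1/pi) * integral (cbox (-pi/2) (pi/2)) (\<lambda>x. g (x + t) * Q x)" for t
  proof -
    have "(\<Prod>j<n. g (x + (\<mu>(i := t)) j)) = g (x + t) * Q x" for x
    proof -
      have "(\<Prod>j<n. g (x + (\<mu>(i := t)) j)) = g (x + (\<mu>(i := t)) i) * (\<Prod>j\<in>{..<n} - {i}. g (x + (\<mu>(i := t)) j))"
        using i by (subst prod.remove[of _ i]) auto
      also have "(\<Prod>j\<in>{..<n} - {i}. g (x + (\<mu>(i := t)) j)) = Q x"
        unfolding Q_def by (rule prod.cong) auto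
      finally show ?thesis by simp
    qed
    then show ?thesis by (simp add: Gavg_def)
  qed
  have g'per: "g' (x + pi) = g' x" for x
  proof -
    have "((\<lambda>x. g (x + pi)) has_real_derivative g' (x + pi) * 1) (at x)"
      by (rule DERIV_chain2[OF deriv]) (auto intro!: derivative_eq_intros)
    then have "(g has_real_derivative g' (x + pi)) (at x)" using per by simp
    then show ?thesis using deriv[of x] DERIV_unique by blast
  qed
  have g'odd: "g' (- x) = - g' x" for x
  proof -
    have "((\<lambda>x. g (- x)) has_real_derivative g' (- x) * (- 1)) (at x)"
      by (rule DERIV_chain2[OF deriv]) (auto intro!: derivative_eq_intros)
    then have "(g has_real_derivative - g' (- x)) (at x)" using even by simp
    then show ?thesis using deriv[of x] DERIV_unique by fastforce
  qed
  have L: "((\<lambda>t. integral (cbox (-pi/2) (pi/2)) (\<lambda>x. g (x + t) * Q x)) has_field_derivative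
          integral (cbox (-pi/2) (pi/2)) (\<lambda>x. g' (x + \<mu> i) * Q x)) (at (\<mu> i) within UNIV)"
  proof (rule leibniz_rule_field_derivative[where fx="\<lambda>t x. g' (x + t) * Q x"])
    fix t x :: real
    show "((\<lambda>t. g (x + t) * Q x) has_field_derivative g' (x + t) * Q x) (at t within UNIV)"
    proof -
      have "((\<lambda>t. g (x + t)) has_real_derivative g' (x + t) * 1) (at t)"
        by (rule DERIV_chain2[OF deriv]) (auto intro!: derivative_eq_intros)
      then have "((\<lambda>t. g (x + t) * Q x) has_real_derivative g' (x + t) * 1 * Q x) (at t)"
        by (rule DERIV_cmult_right)
      then show ?thesis by (simp add: add.commute)
    qed
  next
    fix t :: real
    show "(\<lambda>x. g (x + t) * Q x) integrable_on cbox (- pi / 2) (pi / 2)"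
      by (intro integrable_continuous continuous_intros gc' Qc)
  next
    show "continuous_on (UNIV \<times> cbox (- pi / 2) (pi / 2)) (\<lambda>(t, x). g' (x + t) * Q x)"
      unfolding case_prod_beta by (intro continuous_intros gc'' Qc)
  qed auto
  have S1: "integral ?I (\<lambda>x. g' (x + \<mu> i) * Q x) = integral ?I (\<lambda>y. g' y * A y)"
  proof -
    have "integral ?I (\<lambda>x. g' (x + \<mu> i) * Q x) = integral ?I (\<lambda>x. (\<lambda>y. g' y * A y) (x + \<mu> i))"
      by (simp add: A_def Q_def)
    also have "\<dots> = integral ?I (\<lambda>y. g' y * A y)"
    proof (rule periodic_shift)
      show "continuous_on UNIV (\<lambda>y. g' y * A y)" by (intro continuous_intros cont Ac)
      fix x
      show "g' (x + pi) * A (x + pi) = g' x * A x"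
      proof -
        have "A (x + pi) = A x"
          unfolding A_def
        proof (rule prod.cong)
          fix j
          have "x + pi + \<mu> j - \<mu> i = (x + \<mu> j - \<mu> i) + pi" by simp
          then show "g (x + pi + \<mu> j - \<mu> i) = g (x + \<mu> j - \<mu> i)" using per by metis
        qed simp
        then show ?thesis using g'per by simp
      qed
    qed
    finally show ?thesis .
  qed
  have S2: "integral ?I (\<lambda>y. g' y * B y) = - integral ?I (\<lambda>y. g' y * A y)"
  proof -
    have BA: "B y = A (- y)" for y
      unfolding A_def B_def by (rule prod.cong) (auto simp: algebra_simps intro: even, metis even minus_diff_eq)
    have "integral ?I (\<lambda>y. g' y * B y) = integral {-(pi/2)..-(-pi/2)} (\<lambda>y. (\<lambda>y. - g' y * A y) (- y))"
      by (simp add: BA g'odd)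
    also have "\<dots> = integral ?I (\<lambda>y. - g' y * A y)"
      by (rule Henstock_Kurzweil_Integration.integral_reflect_real[where a="-pi/2" and b="pi/2" and f="\<lambda>y. - g' y * A y"])
    also have "\<dots> = - integral ?I (\<lambda>y. g' y * A y)"
      by (simp add: integral_neg)
    finally show ?thesis .
  qed
  have intA: "(\<lambda>y. g' y * A y) integrable_on ?I" "(\<lambda>y. g' y * B y) integrable_on ?I"
    by (intro integrable_continuous_interval continuous_intros cont Ac Bc continuous_on_subset[OF cont] continuous_on_subset[OF Ac] continuous_on_subset[OF Bc]; simp)+
  have R: "(1 / (2 * pi)) * integral ?I (\<lambda>x. g' x * (A x - B x)) = (1/pi) * integral ?I (\<lambda>x. g' (x + \<mu> i) * Q x)"
  proof -
    have "integral ?I (\<lambda>x. g' x * (A x - B x)) = integral ?I (\<lambda>y. g' y * A y) - integral ?I (\<lambda>y. g' y * B y)"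
      using intA by (simp add: right_diff_distrib integral_diff)
    then show ?thesis using S1 S2 by simp
  qed
  have "((\<lambda>t. (1/pi) * integral (cbox (-pi/2) (pi/2)) (\<lambda>x. g (x + t) * Q x)) has_real_derivative
          (1/pi) * integral (cbox (-pi/2) (pi/2)) (\<lambda>x. g' (x + \<mu> i) * Q x)) (at (\<mu> i))"
    using DERIV_cmult[OF L, of "1/pi"] by simp
  then show ?thesis
    using R G by (simp add: A_def B_def)
qed
end
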